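(* For every (possibly partial) function $f:\mathcal{S}\to\mathcal{Z}$, $\mathcal{S}\subseteq\mathcal{X}\times\mathcal{Y}$, every $\varepsilon\ge0$ and every $z_0\in\mathcal{Z}$, $$\mathrm{srec}^{z_0}_\varepsilon(f)\le\overline{\mathrm{prt}}_\varepsilon(f)\le\mathrm{prt}_\varepsilon(f).$$
   Context: $\mathcal{X},\mathcal{Y},\mathcal{Z}$ finite; rectangles are $A\times B$ with $A\subseteq\mathcal{X},B\subseteq\mathcal{Y}$ (including empty); sums over $R$ range over all rectangles. Relaxed partition bound: for a distribution $\mu$ on $\mathcal{X}\times\mathcal{Y}$, $\overline{\mathrm{prt}}^\mu_\varepsilon(f)$ is the value of: minimize $1/\eta$ over $\eta>0$, $p_{R,z}\ge0$ s.t. (i) $\sum_{(x,y)\in\mathcal{S}}\mu(x,y)\sum_{R\ni(x,y)}p_{R,f(x,y)}+\sum_{(x,y)\notin\mathcal{S}}\mu(x,y)\sum_{z,R\ni(x,y)}p_{R,z}\ge(1-\varepsilon)\eta$; (ii) $\forall (x,y)\in\mathcal{X}\times\mathcal{Y}$: $\sum_{z,R\ni(x,y)}p_{R,z}\le\eta$; (iii) $\sum_{R,z}p_{R,z}=1$. $\overline{\mathrm{prt}}_\varepsilon(f)=\max_\mu\overline{\mathrm{prt}}^\mu_\varepsilon(f)$. Partition bound (Jain–Klauck): $\mathrm{prt}_\varepsilon(f)=\min\sum_{R,z}w_{R,z}$ over $w_{R,z}\ge0$ s.t. $\forall(x,y)\in\mathcal{S}$: $\sum_{R\ni(x,y)}w_{R,f(x,y)}\ge1-\varepsilon$,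 and $\forall(x,y)\in\mathcal{X}\times\mathcal{Y}$: $\sum_{z,R\ni(x,y)}w_{R,z}=1$. Smooth rectangle bound: $\mathrm{srec}^{z_0}_\varepsilon(f)=\min\sum_R w'_R$ over $w'_R\ge0$ s.t. $\forall(x,y)\in f^{-1}(z_0)$: $1-\varepsilon\le\sum_{R\ni(x,y)}w'_R\le1$, and $\forall(x,y)\in\mathcal{S}\setminus f^{-1}(z_0)$: $\sum_{R\ni(x,y)}w'_R\le\varepsilon$. *)

theory Defs
  imports Main Complex_Main
begin

text \<open>Rectangles are pairs (A,B) with A a subset of X and B a subset of Y.
  The partial function f on S is modelled by a total f together with its domain S;
  values of f outside S are never used.\<close>

definition rects_at :: "'x \<times> 'y \<Rightarrow> ('x set \<times> 'y set) set" where
  "rects_at xy = {R. fst xy \<in> fst R \<and> snd xy \<in> snd R}"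

definition prt :: "('x::finite \<times> 'y::finite) set \<Rightarrow> ('x \<times> 'y \<Rightarrow> 'z::finite) \<Rightarrow> real \<Rightarrow> real" where
  "prt S f \<epsilon> = Inf {(\<Sum>R\<in>UNIV. \<Sum>z\<in>UNIV. w R z) | w.
      (\<forall>R z. 0 \<le> w R z) \<and>
      (\<forall>xy\<in>S. 1 - \<epsilon> \<le> (\<Sum>R\<in>rects_at xy. w R (f xy))) \<and>
      (\<forall>xy. (\<Sum>z\<in>UNIV. \<Sum>R\<in>rects_at xy. w R z) = 1)}"

definition prt_relax_mu :: "('x::finite \<times> 'y::finite) set \<Rightarrow> ('x \<times> 'y \<Rightarrow> 'z::finite) \<Rightarrow> real
    \<Rightarrow> ('x \<times> 'y \<Rightarrow> real) \<Rightarrow> real" where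
  "prt_relax_mu S f \<epsilon> \<mu> = Inf {1 / \<eta> | \<eta> p.
      0 < \<eta> \<and> (\<forall>R z. 0 \<le> p R z) \<and>
      (\<Sum>xy\<in>S. \<mu> xy * (\<Sum>R\<in>rects_at xy. p R (f xy)))
        + (\<Sum>xy\<in>- S. \<mu> xy * (\<Sum>z\<in>UNIV. \<Sum>R\<in>rects_at xy. p R z)) \<ge> (1 - \<epsilon>) * \<eta> \<and>
      (\<forall>xy. (\<Sum>z\<in>UNIV. \<Sum>R\<in>rects_at xy. p R z) \<le> \<eta>) \<and>
      (\<Sum>R\<in>UNIV. \<Sum>z\<in>UNIV. p R z) = 1}"

definition prt_relax :: "('x::finite \<times> 'y::finite) set \<Rightarrow> ('x \<times> 'y \<Rightarrow> 'z::finite) \<Rightarrow> real \<Rightarrow> real" where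
  "prt_relax S f \<epsilon> = Sup {prt_relax_mu S f \<epsilon> \<mu> | \<mu>.
      (\<forall>xy. 0 \<le> \<mu> xy) \<and> (\<Sum>xy\<in>UNIV. \<mu> xy) = 1}"

definition srec :: "('x::finite \<times> 'y::finite) set \<Rightarrow> ('x \<times> 'y \<Rightarrow> 'z::finite) \<Rightarrow> real \<Rightarrow> 'z \<Rightarrow> real" where
  "srec S f \<epsilon> z0 = Inf {(\<Sum>R\<in>UNIV. w R) | w.
      (\<forall>R. 0 \<le> w R) \<and>
      (\<forall>xy\<in>S. f xy = z0 \<longrightarrow> 1 - \<epsilon> \<le> (\<Sum>R\<in>rects_at xy. w R) \<and> (\<Sum>R\<in>rects_at xy. w R) \<le> 1) \<and>
      (\<forall>xy\<in>S. f xy \<noteq> z0 \<longrightarrow> (\<Sum>R\<in>rects_at xy. w R) \<le> \<epsilon>)}"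

end

theory Submission
  imports Defs "HOL-Analysis.Analysis"
begin

definition PRM :: "('x::finite \<times> 'y::finite) set \<Rightarrow> ('x \<times> 'y \<Rightarrow> 'z::finite) \<Rightarrow> real \<Rightarrow> ('x \<times> 'y \<Rightarrow> real) \<Rightarrow> real set" where "PRM S f \<epsilon> \<mu> = {1 / \<eta> | \<eta> p.
      0 < \<eta> \<and> (\<forall>R z. 0 \<le> p R z) \<and>
      (\<Sum>xy\<in>S. \<mu> xy * (\<Sum>R\<in>rects_at xy. p R (f xy)))
        + (\<Sum>xy\<in>- S. \<mu> xy * (\<Sum>z\<in>UNIV. \<Sum>R\<in>rects_at xy. p R z)) \<ge> (1 - \<epsilon>) * \<eta> \<and>
      (\<forall>xy. (\<Sum>z\<in>UNIV. \<Sum>R\<in>rects_at xy. p R z) \<le> \<eta>) \<and>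
      (\<Sum>R\<in>UNIV. \<Sum>z\<in>UNIV. p R z) = 1}"

lemma PRM_eq: "prt_relax_mu S f \<epsilon> \<mu> = Inf (PRM S f \<epsilon> \<mu>)"
  by (simp add: prt_relax_mu_def PRM_def)

definition PRT :: "('x::finite \<times> 'y::finite) set \<Rightarrow> ('x \<times> 'y \<Rightarrow> 'z::finite) \<Rightarrow> real \<Rightarrow> real set" where "PRT S f \<epsilon> = {(\<Sum>R\<in>UNIV. \<Sum>z\<in>UNIV. w R z) | w.
      (\<forall>R z. 0 \<le> w R z) \<and>
      (\<forall>xy\<in>S. 1 - \<epsilon> \<le> (\<Sum>R\<in>rects_at xy. w R (f xy))) \<and>
      (\<forall>xy. (\<Sum>z\<in>UNIV. \<Sum>R\<in>rects_at xy. w R z) = 1)}"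

lemma PRT_eq: "prt S f \<epsilon> = Inf (PRT S f \<epsilon>)"
  by (simp add: prt_def PRT_def)

definition SREC :: "('x::finite \<times> 'y::finite) set \<Rightarrow> ('x \<times> 'y \<Rightarrow> 'z::finite) \<Rightarrow> real \<Rightarrow> 'z \<Rightarrow> real set" where "SREC S f \<epsilon> z0 = {(\<Sum>R\<in>UNIV. w R) | w.
      (\<forall>R. 0 \<le> w R) \<and>
      (\<forall>xy\<in>S. f xy = z0 \<longrightarrow> 1 - \<epsilon> \<le> (\<Sum>R\<in>rects_at xy. w R) \<and> (\<Sum>R\<in>rects_at xy. w R) \<le> 1) \<and>
      (\<forall>xy\<in>S. f xy \<noteq> z0 \<longrightarrow> (\<Sum>R\<in>rects_at xy. w R) \<le> \<epsilon>)}"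

lemma SREC_eq: "srec S f \<epsilon> z0 = Inf (SREC S f \<epsilon> z0)"
  by (simp add: srec_def SREC_def)

lemma sum_split_Compl:
  fixes g :: "'a::finite \<Rightarrow> real"
  shows "(\<Sum>x\<in>S. g x) + (\<Sum>x\<in>-S. g x) = (\<Sum>x\<in>UNIV. g x)"
  using sum.subset_diff[of S UNIV g] by (simp add: Compl_eq_Diff_UNIV)

lemma PRT_nonempty:
  fixes S :: "('x::finite \<times> 'y::finite) set" and f :: "'x \<times> 'y \<Rightarrow> 'z::finite"
  assumes "0 \<le> \<epsilon>"
  shows "PRT S f \<epsilon> \<noteq> {}"
proof -
  define w :: "'x set \<times> 'y set \<Rightarrow> 'z \<Rightarrow> real" where
    "w R z = (if \<exists>a b. R = ({a},{b}) \<and> z = f (a,b) then 1 else 0)" for R z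
  have key: "(\<Sum>R\<in>rects_at xy. w R z) = (if z = f xy then 1 else 0)" for xy z
  proof -
    obtain x y where xy: "xy = (x,y)" by fastforce
    have "(\<Sum>R\<in>rects_at xy. w R z) = (\<Sum>R\<in>rects_at xy. if R = ({x},{y}) then (if z = f xy then 1 else 0) else 0)"
      by (rule sum.cong) (auto simp: w_def rects_at_def xy)
    also have "\<dots> = (if z = f xy then 1 else 0)"
      by (simp add: rects_at_def xy)
    finally show ?thesis .
  qed
  have "(\<Sum>R\<in>UNIV. \<Sum>z\<in>UNIV. w R z) \<in> PRT S f \<epsilon>"
    unfolding PRT_def mem_Collect_eq
    apply (rule exI[of _ w])
    using assms by (simp add: key) (simp add: w_def)
  then show ?thesis by blast
qed

lemma PRT_in_PRM:
  fixes S :: "('x::finite \<times> 'y::finite) set" and f :: "'x \<times> 'y \<Rightarrow> 'z::finite"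
  assumes eps: "0 \<le> \<epsilon>" and mu: "\<forall>xy. 0 \<le> \<mu> xy" "(\<Sum>xy\<in>UNIV. \<mu> xy) = 1"
    and W: "W \<in> PRT S f \<epsilon>"
  shows "W \<in> PRM S f \<epsilon> \<mu>"
proof -
  obtain w where Wd: "W = (\<Sum>R\<in>UNIV. \<Sum>z\<in>UNIV. w R z)" and w0: "\<forall>R z. 0 \<le> w R z"
    and w1: "\<forall>xy\<in>S. 1 - \<epsilon> \<le> (\<Sum>R\<in>rects_at xy. w R (f xy))"
    and w2: "\<forall>xy. (\<Sum>z\<in>UNIV. \<Sum>R\<in>rects_at xy. w R z) = 1"
    using W unfolding PRT_def by blast
  obtain xy0 :: "'x \<times> 'y" where True by blast
  have "1 = (\<Sum>z\<in>UNIV. \<Sum>R\<in>rects_at xy0. w R z)" using w2 by metis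
  also have "\<dots> = (\<Sum>R\<in>rects_at xy0. \<Sum>z\<in>UNIV. w R z)" by (rule sum.swap)
  also have "\<dots> \<le> (\<Sum>R\<in>UNIV. \<Sum>z\<in>UNIV. w R z)"
    by (rule sum_mono2) (auto intro: sum_nonneg simp: w0)
  finally have W1: "1 \<le> W" using Wd by simp
  define p where "p R z = w R z / W" for R z
  have "1 / (1 / W) \<in> PRM S f \<epsilon> \<mu>"
    unfolding PRM_def mem_Collect_eq
  proof (intro exI conjI)
    show "0 < 1 / W" using W1 by simp
    show "\<forall>R z. 0 \<le> p R z" using w0 W1 by (simp add: p_def)
    show "(\<Sum>R\<in>UNIV. \<Sum>z\<in>UNIV. p R z) = 1"
      using W1 by (simp add: p_def Wd[symmetric] sum_divide_distrib[symmetric])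
    have cov: "(\<Sum>z\<in>UNIV. \<Sum>R\<in>rects_at xy. p R z) = 1 / W" for xy
      using w2[rule_format, of xy] by (simp add: p_def sum_divide_distrib[symmetric])
    show "\<forall>xy. (\<Sum>z\<in>UNIV. \<Sum>R\<in>rects_at xy. p R z) \<le> 1 / W" using cov by simp
    have "(1 - \<epsilon>) * (1 / W) = (\<Sum>xy\<in>UNIV. \<mu> xy * ((1 - \<epsilon>) / W))"
      using mu(2) by (simp only: sum_distrib_right[symmetric]) simp
    also have "\<dots> = (\<Sum>xy\<in>S. \<mu> xy * ((1 - \<epsilon>) / W)) + (\<Sum>xy\<in>-S. \<mu> xy * ((1 - \<epsilon>) / W))"
      by (rule sum_split_Compl[symmetric])
    also have "\<dots> \<le> (\<Sum>xy\<in>S. \<mu> xy * (\<Sum>R\<in>rects_at xy. p R (f xy)))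
        + (\<Sum>xy\<in>- S. \<mu> xy * (\<Sum>z\<in>UNIV. \<Sum>R\<in>rects_at xy. p R z))"
    proof (rule add_mono; rule sum_mono)
      fix xy assume "xy \<in> S"
      then have "(1 - \<epsilon>) / W \<le> (\<Sum>R\<in>rects_at xy. p R (f xy))"
        using w1 W1 by (simp add: p_def sum_divide_distrib[symmetric] divide_right_mono)
      then show "\<mu> xy * ((1 - \<epsilon>) / W) \<le> \<mu> xy * (\<Sum>R\<in>rects_at xy. p R (f xy))"
        using mu(1) by (metis mult_left_mono)
    next
      fix xy
      have "(1 - \<epsilon>) / W \<le> 1 / W" using eps W1 by (simp add: divide_right_mono)
      then show "\<mu> xy * ((1 - \<epsilon>) / W) \<le> \<mu> xy * (\<Sum>z\<in>UNIV. \<Sum>R\<in>rects_at xy. p R z)"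
        using mu(1) unfolding cov by (metis mult_left_mono)
    qed
    finally show "(\<Sum>xy\<in>S. \<mu> xy * (\<Sum>R\<in>rects_at xy. p R (f xy)))
        + (\<Sum>xy\<in>- S. \<mu> xy * (\<Sum>z\<in>UNIV. \<Sum>R\<in>rects_at xy. p R z)) \<ge> (1 - \<epsilon>) * (1 / W)" .
  qed simp
  then show ?thesis using W1 by simp
qed

lemma bdd_PRM: "bdd_below (PRM S f \<epsilon> \<mu>)"
  unfolding PRM_def by (rule bdd_belowI[of _ 0]) auto

lemma bdd_SREC: "bdd_below (SREC S f \<epsilon> z0)"
  unfolding SREC_def by (rule bdd_belowI[of _ 0]) (auto intro: sum_nonneg)

lemma PRM_nonempty:
  fixes S :: "('x::finite \<times> 'y::finite) set" and f :: "'x \<times> 'y \<Rightarrow> 'z::finite"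
  assumes eps: "0 \<le> \<epsilon>" and mu: "\<forall>xy. 0 \<le> \<mu> xy" "(\<Sum>xy\<in>UNIV. \<mu> xy) = 1"
  shows "PRM S f \<epsilon> \<mu> \<noteq> {}"
  using PRT_nonempty[OF eps, of S f] PRT_in_PRM[OF eps mu] by blast

lemma mu_le_prt:
  fixes S :: "('x::finite \<times> 'y::finite) set" and f :: "'x \<times> 'y \<Rightarrow> 'z::finite"
  assumes eps: "0 \<le> \<epsilon>" and mu: "\<forall>xy. 0 \<le> \<mu> xy" "(\<Sum>xy\<in>UNIV. \<mu> xy) = 1"
  shows "prt_relax_mu S f \<epsilon> \<mu> \<le> prt S f \<epsilon>"
  unfolding PRT_eq PRM_eq
proof (rule cInf_greatest[OF PRT_nonempty[OF eps]])
  fix W assume "W \<in> PRT S f \<epsilon>"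
  then show "Inf (PRM S f \<epsilon> \<mu>) \<le> W"
    by (rule cInf_lower[OF PRT_in_PRM[OF eps mu] bdd_PRM])
qed

lemma relax_le_prt:
  fixes S :: "('x::finite \<times> 'y::finite) set" and f :: "'x \<times> 'y \<Rightarrow> 'z::finite"
  assumes eps: "0 \<le> \<epsilon>"
  shows "prt_relax S f \<epsilon> \<le> prt S f \<epsilon>"
  unfolding prt_relax_def
proof (rule cSup_least)
  define \<mu> :: "'x \<times> 'y \<Rightarrow> real" where "\<mu> xy = 1 / real (card (UNIV :: ('x \<times> 'y) set))" for xy
  have "(\<Sum>xy\<in>UNIV. \<mu> xy) = 1" by (simp add: \<mu>_def)
  moreover have "\<forall>xy. 0 \<le> \<mu> xy" by (simp add: \<mu>_def)
  ultimately show "{prt_relax_mu S f \<epsilon> \<mu> |\<mu>. (\<forall>xy. 0 \<le> \<mu> xy) \<and> sum \<mu> UNIV = 1} \<noteq> {}" by blast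
next
  fix x assume "x \<in> {prt_relax_mu S f \<epsilon> \<mu> |\<mu>. (\<forall>xy. 0 \<le> \<mu> xy) \<and> sum \<mu> UNIV = 1}"
  then show "x \<le> prt S f \<epsilon>" using mu_le_prt[OF eps] by blast
qed

definition cq :: "real^(('x::finite set \<times> 'y::finite set) \<times> 'z::finite) \<Rightarrow> 'x \<times> 'y \<Rightarrow> real" where
  "cq q xy = (\<Sum>z\<in>UNIV. \<Sum>R\<in>rects_at xy. q $ (R,z))"

definition aq :: "('x::finite \<times> 'y::finite) set \<Rightarrow> ('x \<times> 'y \<Rightarrow> 'z::finite) \<Rightarrow>
    real^(('x set \<times> 'y set) \<times> 'z) \<Rightarrow> 'x \<times> 'y \<Rightarrow> real" where
  "aq S f q xy = (if xy \<in> S then (\<Sum>R\<in>rects_at xy. q $ (R, f xy)) else cq q xy)"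

definition Lm :: "('x::finite \<times> 'y::finite) set \<Rightarrow> ('x \<times> 'y \<Rightarrow> 'z::finite) \<Rightarrow>
    real^(('x set \<times> 'y set) \<times> 'z) \<Rightarrow> real^('x \<times> 'y)" where
  "Lm S f q = (\<chi> xy. aq S f q xy)"

lemma cq_add: "cq (q1 + q2) xy = cq q1 xy + cq q2 xy"
  by (simp add: cq_def sum.distrib)
lemma cq_scale: "cq (c *\<^sub>R q) xy = c * cq q xy"
  by (simp add: cq_def sum_distrib_left)
lemma aq_add: "aq S f (q1 + q2) xy = aq S f q1 xy + aq S f q2 xy"
  by (simp add: aq_def cq_add sum.distrib)
lemma aq_scale: "aq S f (c *\<^sub>R q) xy = c * aq S f q xy"
  by (simp add: aq_def cq_scale sum_distrib_left)

lemma linear_Lm: "linear (Lm S f)"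
  by (rule linearI) (simp_all add: Lm_def vec_eq_iff aq_add aq_scale)

lemma sum_pair_UNIV:
  fixes g :: "'a::finite \<times> 'b::finite \<Rightarrow> real"
  shows "(\<Sum>k\<in>UNIV. g k) = (\<Sum>R\<in>UNIV. \<Sum>z\<in>UNIV. g (R,z))"
proof -
  have "(\<Sum>R\<in>UNIV. \<Sum>z\<in>UNIV. g (R,z)) = (\<Sum>(R,z)\<in>UNIV\<times>UNIV. g (R,z))"
    by (rule sum.cartesian_product)
  then show ?thesis by simp
qed

lemma inner_cart: "inner (u::real^'n::finite) v = (\<Sum>i\<in>UNIV. u$i * v$i)"
  by (simp add: inner_vec_def)

lemma cont_Lm: "continuous_on UNIV (Lm S f)"
  by (rule linear_continuous_on) (simp add: linear_conv_bounded_linear[symmetric] linear_Lm)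

lemma cont_cq: "continuous_on UNIV (\<lambda>q. cq q xy)"
  unfolding cq_def by (intro continuous_intros)

lemma cont_sumq: "continuous_on UNIV (\<lambda>q::real^'n::finite. \<Sum>k\<in>UNIV. q $ k)"
  by (intro continuous_intros)

lemma cont_comp: "continuous_on UNIV (\<lambda>q::real^'n::finite. q $ k)"
  by (intro continuous_intros)


lemma cq_nonneg_le:
  assumes "\<forall>k. 0 \<le> q$k"
  shows "(\<Sum>R\<in>rects_at xy. q $ (R,z)) \<le> cq q xy"
  unfolding cq_def using assms
  by (intro member_le_sum) (auto intro: sum_nonneg)

lemma cq_pair_le:
  assumes "\<forall>k. 0 \<le> q$k" and "z1 \<noteq> z2"
  shows "(\<Sum>R\<in>rects_at xy. q $ (R,z1)) + (\<Sum>R\<in>rects_at xy. q $ (R,z2)) \<le> cq q xy"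
proof -
  have "(\<Sum>R\<in>rects_at xy. q $ (R,z1)) + (\<Sum>R\<in>rects_at xy. q $ (R,z2))
      = (\<Sum>z\<in>{z1,z2}. \<Sum>R\<in>rects_at xy. q $ (R,z))" using assms(2) by simp
  also have "\<dots> \<le> cq q xy" unfolding cq_def using assms(1)
    by (intro sum_mono2) (auto intro: sum_nonneg)
  finally show ?thesis .
qed


lemma part1:
  fixes S :: "('x::finite \<times> 'y::finite) set" and f :: "'x \<times> 'y \<Rightarrow> 'z::finite"
  assumes eps: "0 \<le> \<epsilon>" and t0: "0 \<le> t" and ts: "t < srec S f \<epsilon> z0"
  shows "\<exists>\<mu>. (\<forall>xy. 0 \<le> \<mu> xy) \<and> (\<Sum>xy\<in>UNIV. \<mu> xy) = 1 \<and> t \<le> prt_relax_mu S f \<epsilon> \<mu>"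
proof -
  define Q :: "(real^(('x set \<times> 'y set) \<times> 'z)) set" where
    "Q = {q. (\<forall>k. 0 \<le> q$k) \<and> (\<forall>xy. cq q xy \<le> 1) \<and> (\<Sum>k\<in>UNIV. q$k) \<le> t}"
  define V where "V = Lm S f ` Q"
  define D :: "(real^('x \<times> 'y)) set" where "D = {v. \<forall>xy. 1 - \<epsilon> \<le> v$xy}"
  have convQ: "convex Q"
  proof (rule convexI)
    fix q1 q2 and a b :: real
    assume q1: "q1 \<in> Q" and q2: "q2 \<in> Q" and a: "0 \<le> a" and b: "0 \<le> b" and ab: "a + b = 1"
    have q1f: "\<And>k. 0 \<le> q1$k" "\<And>xy. cq q1 xy \<le> 1" "(\<Sum>k\<in>UNIV. q1$k) \<le> t"
      using q1 unfolding Q_def by blast+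
    have q2f: "\<And>k. 0 \<le> q2$k" "\<And>xy. cq q2 xy \<le> 1" "(\<Sum>k\<in>UNIV. q2$k) \<le> t"
      using q2 unfolding Q_def by blast+
    have "0 \<le> (a *\<^sub>R q1 + b *\<^sub>R q2) $ k" for k
    proof -
      have "0 \<le> q1 $ k" "0 \<le> q2 $ k" using q1 q2 unfolding Q_def by blast+
      then show ?thesis using a b by simp
    qed
    moreover have "cq (a *\<^sub>R q1 + b *\<^sub>R q2) xy \<le> 1" for xy
    proof -
      have "cq (a *\<^sub>R q1 + b *\<^sub>R q2) xy = a * cq q1 xy + b * cq q2 xy"
        by (simp add: cq_add cq_scale)
      also have "\<dots> \<le> a * 1 + b * 1"
        by (intro add_mono mult_left_mono q1f q2f a b)
      finally show ?thesis using ab by simp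
    qed
    moreover have "(\<Sum>k\<in>UNIV. (a *\<^sub>R q1 + b *\<^sub>R q2) $ k) \<le> t"
    proof -
      have "(\<Sum>k\<in>UNIV. (a *\<^sub>R q1 + b *\<^sub>R q2) $ k) = a * (\<Sum>k\<in>UNIV. q1 $ k) + b * (\<Sum>k\<in>UNIV. q2 $ k)"
        by (simp add: sum.distrib sum_distrib_left)
      also have "\<dots> \<le> a * t + b * t"
        by (intro add_mono mult_left_mono q1f q2f a b)
      finally show ?thesis using ab by (simp add: distrib_right[symmetric])
    qed
    ultimately show "a *\<^sub>R q1 + b *\<^sub>R q2 \<in> Q" by (simp add: Q_def)
  qed
  have closedQ: "closed Q"
  proof -
    have eqQ: "Q = {q. \<forall>k. 0 \<le> q$k} \<inter> {q. \<forall>xy. cq q xy \<le> 1} \<inter> {q. (\<Sum>k\<in>UNIV. q$k) \<le> t}"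
      by (auto simp: Q_def)
    have c1: "closed {q::real^(('x set \<times> 'y set) \<times> 'z). \<forall>k. 0 \<le> q$k}"
      by (intro closed_Collect_all closed_Collect_le continuous_on_const cont_comp)
    have c2: "closed {q::real^(('x set \<times> 'y set) \<times> 'z). \<forall>xy. cq q xy \<le> 1}"
      by (intro closed_Collect_all closed_Collect_le continuous_on_const cont_cq)
    have c3: "closed {q::real^(('x set \<times> 'y set) \<times> 'z). (\<Sum>k\<in>UNIV. q$k) \<le> t}"
      by (intro closed_Collect_le continuous_on_const cont_sumq)
    show ?thesis unfolding eqQ by (intro closed_Int c1 c2 c3)
  qed
  have boundedQ: "bounded Q"
    unfolding bounded_iff
  proof (intro exI ballI)
    fix q assume q: "q \<in> Q"
    have "norm q \<le> (\<Sum>k\<in>UNIV. \<bar>q$k\<bar>)" by (rule norm_le_l1_cart)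
    also have "\<dots> = (\<Sum>k\<in>UNIV. q$k)"
      using q unfolding Q_def by (intro sum.cong) auto
    also have "\<dots> \<le> t" using q unfolding Q_def by blast
    finally show "norm q \<le> t" .
  qed
  have compV: "compact V"
    unfolding V_def
    by (rule compact_continuous_image[OF continuous_on_subset[OF cont_Lm]])
       (auto simp: compact_eq_bounded_closed boundedQ closedQ)
  have convV: "convex V"
    unfolding V_def by (rule convex_linear_image[OF linear_Lm convQ])
  have Q0: "0 \<in> Q" using t0 by (simp add: Q_def cq_def)
  have V0: "0 \<in> V" unfolding V_def using Q0 linear_0[OF linear_Lm] by (metis image_eqI)
  have convD: "convex D"
  proof (rule convexI)
    fix v1 v2 and a b :: real
    assume v1: "v1 \<in> D" and v2: "v2 \<in> D" and a: "0 \<le> a" and b: "0 \<le> b" and ab: "a + b = 1"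
    have "1 - \<epsilon> \<le> (a *\<^sub>R v1 + b *\<^sub>R v2) $ xy" for xy
    proof -
      have "1 - \<epsilon> \<le> v1$xy" "1 - \<epsilon> \<le> v2$xy" using v1 v2 unfolding D_def by blast+
      then have "a * (1 - \<epsilon>) + b * (1 - \<epsilon>) \<le> a * v1$xy + b * v2$xy"
        using a b by (intro add_mono mult_left_mono)
      then show ?thesis using ab by (simp add: distrib_right[symmetric])
    qed
    then show "a *\<^sub>R v1 + b *\<^sub>R v2 \<in> D" by (simp add: D_def)
  qed
  have closedD: "closed D"
    unfolding D_def by (intro closed_Collect_all closed_Collect_le continuous_on_const cont_comp)
  have disj: "V \<inter> D = {}"
  proof (rule ccontr)
    assume "V \<inter> D \<noteq> {}"
    then obtain q where q: "q \<in> Q" and qD: "Lm S f q \<in> D" unfolding V_def by blast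
    have qa: "1 - \<epsilon> \<le> aq S f q xy" for xy
    proof -
      have "1 - \<epsilon> \<le> Lm S f q $ xy" using qD unfolding D_def by blast
      then show ?thesis by (simp add: Lm_def)
    qed
    have q0: "\<forall>k. 0 \<le> q$k" and qc: "\<And>xy. cq q xy \<le> 1" and qs: "(\<Sum>k\<in>UNIV. q$k) \<le> t"
      using q unfolding Q_def by blast+
    define w where "w R = q $ (R, z0)" for R
    have "(\<Sum>R\<in>UNIV. w R) \<in> SREC S f \<epsilon> z0"
      unfolding SREC_def mem_Collect_eq
    proof (intro exI conjI ballI allI impI)
      show "0 \<le> w R" for R using q0 unfolding w_def by blast
      fix xy assume xyS: "xy \<in> S"
      { assume fz: "f xy = z0"
        show "1 - \<epsilon> \<le> (\<Sum>R\<in>rects_at xy. w R)"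
          using qa[of xy] xyS fz by (simp add: aq_def w_def)
        show "(\<Sum>R\<in>rects_at xy. w R) \<le> 1"
          using cq_nonneg_le[OF q0, where xy=xy and z=z0] qc[of xy] by (simp add: w_def)
      }
      assume fz: "f xy \<noteq> z0"
      have "(\<Sum>R\<in>rects_at xy. w R) + (\<Sum>R\<in>rects_at xy. q $ (R, f xy)) \<le> cq q xy"
        unfolding w_def by (rule cq_pair_le[OF q0]) (use fz in auto)
      moreover have "1 - \<epsilon> \<le> (\<Sum>R\<in>rects_at xy. q $ (R, f xy))"
        using qa[of xy] xyS by (simp add: aq_def)
      ultimately show "(\<Sum>R\<in>rects_at xy. w R) \<le> \<epsilon>" using qc[of xy] by linarith
    qed simp
    then have "srec S f \<epsilon> z0 \<le> (\<Sum>R\<in>UNIV. w R)"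
      unfolding SREC_eq by (rule cInf_lower[OF _ bdd_SREC])
    also have "\<dots> \<le> (\<Sum>R\<in>UNIV. \<Sum>z\<in>UNIV. q $ (R,z))"
      unfolding w_def using q0 by (intro sum_mono member_le_sum) (auto simp del: split_paired_All)
    also have "\<dots> = (\<Sum>k\<in>UNIV. q$k)" by (rule sum_pair_UNIV[symmetric])
    also have "\<dots> \<le> t" by (rule qs)
    finally show False using ts by simp
  qed
  have "V \<noteq> {}" using V0 by blast
  then obtain u b where sepV: "\<forall>x\<in>V. inner u x < b" and sepD: "\<forall>x\<in>D. b < inner u x"
    using separating_hyperplane_compact_closed[OF convV compV _ convD closedD disj] by blast
  have innr: "inner u v = (\<Sum>xy\<in>UNIV. u$xy * v$xy)" for v by (rule inner_cart)
  define \<sigma> where "\<sigma> = (\<Sum>xy\<in>UNIV. u$xy)"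
  have u0: "0 \<le> u$i" for i
  proof (rule ccontr)
    assume "\<not> 0 \<le> u$i" hence ui: "u$i < 0" by simp
    define M where "M = \<bar>(1-\<epsilon>)*\<sigma> - b\<bar> / (- u$i)"
    have M0: "0 \<le> M" using ui unfolding M_def by (intro divide_nonneg_pos) auto
    define d :: "real^('x\<times>'y)" where "d = (\<chi> xy. (1-\<epsilon>) + (if xy = i then M else 0))"
    have "d \<in> D" unfolding D_def d_def using M0 by simp
    then have "b < inner u d" using sepD by blast
    also have "inner u d = (\<Sum>xy\<in>UNIV. u$xy*(1-\<epsilon>) + (if xy = i then u$i * M else 0))"
      unfolding innr d_def by (intro sum.cong) (auto simp: distrib_left)
    also have "\<dots> = \<sigma>*(1-\<epsilon>) + u$i*M" by (simp add: sum.distrib sum_distrib_right \<sigma>_def)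
    also have "u$i*M = - \<bar>(1-\<epsilon>)*\<sigma> - b\<bar>" using ui by (simp add: M_def)
    finally show False by (simp add: mult.commute)
  qed
  have "inner u 0 < b" using sepV V0 by blast
  then have b0: "0 < b" by simp
  define d0 :: "real^('x\<times>'y)" where "d0 = (\<chi> xy. 1-\<epsilon>)"
  have "d0 \<in> D" unfolding D_def d0_def by simp
  then have "b < inner u d0" using sepD by blast
  also have "inner u d0 = \<sigma> * (1-\<epsilon>)" unfolding innr d0_def \<sigma>_def by (simp add: sum_distrib_right)
  finally have bd0: "b < \<sigma> * (1-\<epsilon>)" .
  have "0 \<le> \<sigma>" unfolding \<sigma>_def by (intro sum_nonneg) (simp add: u0)
  moreover have "\<sigma> \<noteq> 0" using bd0 b0 by auto
  ultimately have \<sigma>0: "0 < \<sigma>" by simp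
  define \<mu> where "\<mu> xy = u$xy / \<sigma>" for xy
  have \<mu>0: "\<forall>xy. 0 \<le> \<mu> xy" using u0 \<sigma>0 by (simp add: \<mu>_def)
  have \<mu>1: "(\<Sum>xy\<in>UNIV. \<mu> xy) = 1" using \<sigma>0 by (simp add: \<mu>_def sum_divide_distrib[symmetric] \<sigma>_def[symmetric])
  have "t \<le> prt_relax_mu S f \<epsilon> \<mu>"
    unfolding PRM_eq
  proof (rule cInf_greatest[OF PRM_nonempty[OF eps \<mu>0 \<mu>1]])
    fix x assume "x \<in> PRM S f \<epsilon> \<mu>"
    then obtain \<eta> p where x: "x = 1/\<eta>" and \<eta>0: "0 < \<eta>" and p0: "\<forall>R z. 0 \<le> p R z"
      and pi: "(\<Sum>xy\<in>S. \<mu> xy * (\<Sum>R\<in>rects_at xy. p R (f xy)))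
        + (\<Sum>xy\<in>- S. \<mu> xy * (\<Sum>z\<in>UNIV. \<Sum>R\<in>rects_at xy. p R z)) \<ge> (1 - \<epsilon>) * \<eta>"
      and pc: "\<forall>xy. (\<Sum>z\<in>UNIV. \<Sum>R\<in>rects_at xy. p R z) \<le> \<eta>"
      and ps: "(\<Sum>R\<in>UNIV. \<Sum>z\<in>UNIV. p R z) = 1"
      unfolding PRM_def by blast
    show "t \<le> x"
    proof (rule ccontr)
      assume "\<not> t \<le> x" hence xt: "x < t" by simp
      define q :: "real^(('x set \<times> 'y set) \<times> 'z)" where "q = (\<chi> k. p (fst k) (snd k) / \<eta>)"
      have qv: "q $ (R,z) = p R z / \<eta>" for R z by (simp add: q_def)
      have cqq: "cq q xy = (\<Sum>z\<in>UNIV. \<Sum>R\<in>rects_at xy. p R z) / \<eta>" for xy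
        by (simp add: cq_def qv sum_divide_distrib[symmetric])
      have "q \<in> Q" unfolding Q_def mem_Collect_eq
      proof (intro conjI allI)
        fix k have "0 \<le> p (fst k) (snd k)" using p0 by blast
        then show "0 \<le> q $ k" using \<eta>0 by (simp add: q_def)
      next
        fix xy show "cq q xy \<le> 1" unfolding cqq using pc[rule_format, of xy] \<eta>0 by simp
      next
        have "(\<Sum>k\<in>UNIV. q$k) = (\<Sum>R\<in>UNIV. \<Sum>z\<in>UNIV. p R z) / \<eta>"
          by (simp add: sum_pair_UNIV qv sum_divide_distrib[symmetric])
        also have "\<dots> = x" using ps x by simp
        finally show "(\<Sum>k\<in>UNIV. q$k) \<le> t" using xt by simp
      qed
      then have "Lm S f q \<in> V" unfolding V_def by blast
      then have lt: "inner u (Lm S f q) < b" using sepV by blast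
      have "inner u (Lm S f q) = (\<Sum>xy\<in>UNIV. \<sigma> * (\<mu> xy * aq S f q xy))"
        unfolding innr using \<sigma>0 by (intro sum.cong) (auto simp: Lm_def \<mu>_def)
      also have "\<dots> = \<sigma> * (\<Sum>xy\<in>UNIV. \<mu> xy * aq S f q xy)" by (simp add: sum_distrib_left)
      also have "(\<Sum>xy\<in>UNIV. \<mu> xy * aq S f q xy)
          = (\<Sum>xy\<in>S. \<mu> xy * aq S f q xy) + (\<Sum>xy\<in>-S. \<mu> xy * aq S f q xy)"
        by (rule sum_split_Compl[symmetric])
      also have "(\<Sum>xy\<in>S. \<mu> xy * aq S f q xy) = (\<Sum>xy\<in>S. \<mu> xy * (\<Sum>R\<in>rects_at xy. p R (f xy))) / \<eta>"
      proof -
        have "(\<Sum>xy\<in>S. \<mu> xy * aq S f q xy) = (\<Sum>xy\<in>S. \<mu> xy * (\<Sum>R\<in>rects_at xy. p R (f xy)) / \<eta>)"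
          by (intro sum.cong) (simp_all add: aq_def qv sum_divide_distrib[symmetric])
        then show ?thesis by (simp only: sum_divide_distrib[symmetric])
      qed
      also have "(\<Sum>xy\<in>-S. \<mu> xy * aq S f q xy) = (\<Sum>xy\<in>-S. \<mu> xy * (\<Sum>z\<in>UNIV. \<Sum>R\<in>rects_at xy. p R z)) / \<eta>"
      proof -
        have "(\<Sum>xy\<in>-S. \<mu> xy * aq S f q xy) = (\<Sum>xy\<in>-S. \<mu> xy * (\<Sum>z\<in>UNIV. \<Sum>R\<in>rects_at xy. p R z) / \<eta>)"
          by (intro sum.cong) (simp_all add: aq_def cqq)
        then show ?thesis by (simp only: sum_divide_distrib[symmetric])
      qed
      finally have eqi: "inner u (Lm S f q) = \<sigma> * (((\<Sum>xy\<in>S. \<mu> xy * (\<Sum>R\<in>rects_at xy. p R (f xy)))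
        + (\<Sum>xy\<in>- S. \<mu> xy * (\<Sum>z\<in>UNIV. \<Sum>R\<in>rects_at xy. p R z))) / \<eta>)"
        by (simp add: add_divide_distrib)
      have "1 - \<epsilon> \<le> ((\<Sum>xy\<in>S. \<mu> xy * (\<Sum>R\<in>rects_at xy. p R (f xy)))
        + (\<Sum>xy\<in>- S. \<mu> xy * (\<Sum>z\<in>UNIV. \<Sum>R\<in>rects_at xy. p R z))) / \<eta>"
        using pi \<eta>0 by (simp add: pos_le_divide_eq)
      then have "\<sigma> * (1 - \<epsilon>) \<le> inner u (Lm S f q)" unfolding eqi using \<sigma>0
        by (simp only: mult_left_mono less_imp_le)
      then show False using lt bd0 by simp
    qed
  qed
  then show ?thesis using \<mu>0 \<mu>1 by blast
qed


lemma le_relax: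
  fixes S :: "('x::finite \<times> 'y::finite) set" and f :: "'x \<times> 'y \<Rightarrow> 'z::finite"
  assumes eps: "0 \<le> \<epsilon>" and mu: "\<forall>xy. 0 \<le> \<mu> xy" "(\<Sum>xy\<in>UNIV. \<mu> xy) = 1"
  shows "prt_relax_mu S f \<epsilon> \<mu> \<le> prt_relax S f \<epsilon>"
  unfolding prt_relax_def
proof (rule cSup_upper)
  show "prt_relax_mu S f \<epsilon> \<mu> \<in> {prt_relax_mu S f \<epsilon> \<mu> |\<mu>. (\<forall>xy. 0 \<le> \<mu> xy) \<and> sum \<mu> UNIV = 1}"
    using mu by blast
  show "bdd_above {prt_relax_mu S f \<epsilon> \<mu> |\<mu>. (\<forall>xy. 0 \<le> \<mu> xy) \<and> sum \<mu> UNIV = 1}"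
    by (rule bdd_aboveI[of _ "prt S f \<epsilon>"]) (use mu_le_prt[OF eps] in blast)
qed

lemma mu_nonneg:
  fixes S :: "('x::finite \<times> 'y::finite) set" and f :: "'x \<times> 'y \<Rightarrow> 'z::finite"
  assumes eps: "0 \<le> \<epsilon>" and mu: "\<forall>xy. 0 \<le> \<mu> xy" "(\<Sum>xy\<in>UNIV. \<mu> xy) = 1"
  shows "0 \<le> prt_relax_mu S f \<epsilon> \<mu>"
  unfolding PRM_eq
  by (rule cInf_greatest[OF PRM_nonempty[OF eps mu]]) (auto simp: PRM_def)

theorem lemma3p2:
  fixes S :: "('x::finite \<times> 'y::finite) set" and f :: "'x \<times> 'y \<Rightarrow> 'z::finite"
    and \<epsilon> :: real and z0 :: 'z
  assumes "0 \<le> \<epsilon>"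
  shows "srec S f \<epsilon> z0 \<le> prt_relax S f \<epsilon> \<and> prt_relax S f \<epsilon> \<le> prt S f \<epsilon>"
proof
  show "prt_relax S f \<epsilon> \<le> prt S f \<epsilon>" by (rule relax_le_prt[OF assms])
  define \<mu> :: "'x \<times> 'y \<Rightarrow> real" where "\<mu> xy = 1 / real (card (UNIV :: ('x \<times> 'y) set))" for xy
  have m1: "(\<Sum>xy\<in>UNIV. \<mu> xy) = 1" by (simp add: \<mu>_def)
  have m0: "\<forall>xy. 0 \<le> \<mu> xy" by (simp add: \<mu>_def)
  have nn: "0 \<le> prt_relax S f \<epsilon>"
    using mu_nonneg[OF assms m0 m1, of S f] le_relax[OF assms m0 m1, of S f] by linarith
  show "srec S f \<epsilon> z0 \<le> prt_relax S f \<epsilon>"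
  proof (rule ccontr)
    assume "\<not> srec S f \<epsilon> z0 \<le> prt_relax S f \<epsilon>"
    then have lt: "prt_relax S f \<epsilon> < srec S f \<epsilon> z0" by simp
    define t where "t = (prt_relax S f \<epsilon> + srec S f \<epsilon> z0) / 2"
    have "0 \<le> t" "t < srec S f \<epsilon> z0" using nn lt by (auto simp: t_def)
    then obtain \<mu>' where a: "\<forall>xy. 0 \<le> \<mu>' xy" and b: "(\<Sum>xy\<in>UNIV. \<mu>' xy) = 1"
      and c: "t \<le> prt_relax_mu S f \<epsilon> \<mu>'"
      using part1[OF assms] by blast
    then have "t \<le> prt_relax S f \<epsilon>" using le_relax[OF assms a b, of S f] by linarith
    then show False using lt by (simp add: t_def)
  qed
qed

end
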